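(* For all integers $n\ge1$ and $p\ge0$, $$\mathcal{B}_{n,p}=\frac{2\,n!\,p!}{\pi e}\operatorname{Im}\int_0^{\pi}\left(\frac{\exp\big(\exp(e^{i\theta})\big)}{\big(\exp(e^{i\theta})-1\big)^{p}}-e\sum_{l=0}^{p-1}\frac{\big(\exp(e^{i\theta})-1\big)^{l-p}}{l!}\right)\sin(n\theta)\,d\theta,$$ where $\operatorname{Im}$ denotes the imaginary part.
   Context: For an integer $p\ge0$, the $p$-Bell numbers $\mathcal{B}_{n,p}$ are defined by $\sum_{n\ge0}\mathcal{B}_{n,p}\frac{z^n}{n!}=\sum_{n\ge0}\binom{n+p}{p}^{-1}\frac{(e^z-1)^n}{n!}$. *)

theory Defs
  imports "HOL-Analysis.Analysis" "HOL-Computational_Algebra.Formal_Power_Series"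
begin

text \<open>p-Bell numbers via their exponential generating function, read as an identity of
formal power series: the series sum_k (e^z-1)^k / (k! * binom(k+p,p)) converges in the
fps topology since (e^z-1)^k has order k.\<close>

definition pBell_egf :: "nat \<Rightarrow> real fps" where
  "pBell_egf p = (\<Sum>k. fps_const (1 / (fact k * real ((k + p) choose p))) * (fps_exp 1 - 1) ^ k)"

definition pBell :: "nat \<Rightarrow> nat \<Rightarrow> real" where
  "pBell n p = fact n * fps_nth (pBell_egf p) n"

end

theory Submission
  imports Defs "HOL-Complex_Analysis.Complex_Analysis"
begin


lemma pBell_egf_eq:
  "pBell_egf p = Abs_fps (\<lambda>n. \<Sum>k=0..n. fact p / fact (k + p) * ((fps_exp 1 - 1) ^ k $ n))"
    (is "_ = ?A")
proof -
  define E :: "real fps" where "E = fps_exp 1 - 1"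
  have E0: "E $ 0 = 0" by (simp add: E_def)
  define c :: "nat \<Rightarrow> real" where "c k = 1 / (fact k * real ((k + p) choose p))" for k
  have c: "c k = fact p / fact (k + p)" for k
  proof -
    have n: "fact p * fact k * ((k + p) choose p) = (fact (k + p) :: nat)"
      using binomial_fact_lemma[of p "k + p"] by simp
    have "real (fact p * fact k * ((k + p) choose p)) = real (fact (k + p))"
      by (subst n) (rule refl)
    then have "fact k * fact p * real ((k + p) choose p) = fact (k + p)"
      by (simp only: of_nat_mult of_nat_fact mult_ac)
    then show ?thesis unfolding c_def by (simp add: field_simps)
  qed
  have "(\<lambda>k. fps_const (c k) * E ^ k) sums ?A"
    unfolding sums_def
  proof (rule tendsto_fpsI)
    fix n
    show "eventually (\<lambda>N. (\<Sum>k<N. fps_const (c k) * E ^ k) $ n = ?A $ n) sequentially"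
      using eventually_ge_at_top[of "Suc n"]
    proof eventually_elim
      case (elim N)
      have "(\<Sum>k<N. fps_const (c k) * E ^ k) $ n = (\<Sum>k<N. c k * (E ^ k $ n))"
        by (simp add: fps_sum_nth)
      also have "\<dots> = (\<Sum>k=0..n. c k * (E ^ k $ n))"
        by (rule sum.mono_neutral_right)
           (use elim startsby_zero_power_prefix[OF E0] in auto)
      finally show ?case by (simp add: c E_def)
    qed
  qed
  then show ?thesis unfolding pBell_egf_def c_def E_def by (simp add: sums_iff)
qed



definition Hf :: "nat \<Rightarrow> complex fps" where "Hf p = Abs_fps (\<lambda>k. 1 / fact (k + p))"

lemma Hf_radius: "fps_conv_radius (Hf p) = \<infinity>"
  unfolding fps_conv_radius_def
proof (rule conv_radius_inftyI'')
  fix z :: complex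
  have "summable (\<lambda>n. norm z ^ n /\<^sub>R fact n)"
    using exp_converges[of "norm z"] by (simp add: sums_iff)
  then have "summable (\<lambda>n. norm (fps_nth (Hf p) n * z ^ n))"
  proof (rule summable_comparison_test[rotated], intro exI allI impI)
    fix n :: nat
    have "fact n \<le> (fact (n + p) :: real)" by (intro fact_mono) simp
    then have "norm z ^ n / fact (n + p) \<le> norm z ^ n / fact n"
      by (intro divide_left_mono) auto
    moreover have eq: "norm (fps_nth (Hf p) n * z ^ n) = norm z ^ n / fact (n + p)"
      by (simp add: Hf_def norm_mult norm_divide norm_power norm_fact)
    ultimately show "norm (norm (fps_nth (Hf p) n * z ^ n)) \<le> norm z ^ n /\<^sub>R fact n"
      by (simp add: divide_inverse mult.commute)
  qed
  then show "summable (\<lambda>n. fps_nth (Hf p) n * z ^ n)"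
    by (rule summable_norm_cancel)
qed

lemma Hf_closed:
  assumes "w \<noteq> 0"
  shows "eval_fps (Hf p) w * w ^ p = exp w - (\<Sum>l<p. w ^ l / fact l)"
proof -
  have "(\<lambda>n. fps_nth (Hf p) n * w ^ n) sums eval_fps (Hf p) w"
    by (rule sums_eval_fps) (simp add: Hf_radius)
  then have 1: "(\<lambda>n. fps_nth (Hf p) n * w ^ n * w ^ p) sums (eval_fps (Hf p) w * w ^ p)"
    by (rule sums_mult2)
  have "(\<lambda>n. w ^ n /\<^sub>R fact n) sums exp w" by (rule exp_converges)
  then have "(\<lambda>i. w ^ (i + p) /\<^sub>R fact (i + p)) sums (exp w - (\<Sum>i<p. w ^ i /\<^sub>R fact i))"
    by (subst sums_iff_shift) simp
  moreover have "(\<lambda>i. w ^ (i + p) /\<^sub>R fact (i + p)) = (\<lambda>n. fps_nth (Hf p) n * w ^ n * w ^ p)"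
    by (auto simp: Hf_def scaleR_conv_of_real power_add divide_inverse)
  ultimately have 2: "(\<lambda>n. fps_nth (Hf p) n * w ^ n * w ^ p) sums (exp w - (\<Sum>i<p. w ^ i /\<^sub>R fact i))"
    by simp
  from sums_unique2[OF 1 2] show ?thesis
    by (simp add: scaleR_conv_of_real divide_inverse mult_ac)
qed

definition ff :: "nat \<Rightarrow> complex \<Rightarrow> complex" where
  "ff p z = fact p * eval_fps (Hf p) (exp z - 1)"

lemma ff_holo: "ff p holomorphic_on A"
proof -
  have "eval_fps (Hf p) holomorphic_on UNIV"
    by (rule holomorphic_on_eval_fps) (simp add: Hf_radius)
  then have "(eval_fps (Hf p) \<circ> (\<lambda>z. exp z - 1)) holomorphic_on A"
    by (intro holomorphic_on_compose holomorphic_intros) (auto intro: holomorphic_on_subset simp: Hf_radius)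
  then show ?thesis unfolding ff_def o_def by (intro holomorphic_intros)
qed

lemma ff_expansion: "ff p has_fps_expansion (fps_const (fact p) * (Hf p oo (fps_exp 1 - 1)))"
proof -
  have "(eval_fps (Hf p) \<circ> (\<lambda>z. exp z - 1)) has_fps_expansion (Hf p oo (fps_exp 1 - 1))"
    by (rule has_fps_expansion_compose)
       (auto intro!: eval_fps_has_fps_expansion fps_expansion_intros simp: Hf_radius)
  from has_fps_expansion_cmult_left[OF this, of "fact p"] show ?thesis
    unfolding ff_def o_def .
qed

lemma Epow_nth: "fps_nth ((fps_exp 1 - 1 :: complex fps) ^ k) n = of_real (fps_nth ((fps_exp 1 - 1 :: real fps) ^ k) n)"
proof (induction k arbitrary: n)
  case 0
  then show ?case by simp
next
  case (Suc k)
  show ?case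
    by (simp add: fps_mult_nth Suc.IH) (intro sum.cong; simp)
qed

definition GG :: "nat \<Rightarrow> complex \<Rightarrow> complex" where
  "GG p z = exp (exp z) / (exp z - 1) ^ p
       - exp 1 * (\<Sum>l<p. (exp z - 1) powi (int l - int p) / fact l)"

lemma GG_ff:
  assumes "exp z \<noteq> 1"
  shows "GG p z = exp 1 / fact p * ff p z"
proof -
  define w where "w = exp z - 1"
  have w: "w \<noteq> 0" using assms by (simp add: w_def)
  have e: "exp (exp z) = exp 1 * exp w" by (simp add: w_def flip: exp_add)
  have pw: "w powi (int l - int p) = w ^ l / w ^ p" for l
    using w by (simp add: power_int_diff)
  have "GG p z = exp 1 * ((exp w - (\<Sum>l<p. w ^ l / fact l)) / w ^ p)"
    unfolding GG_def e w_def[symmetric] pw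
    by (simp add: diff_divide_distrib sum_divide_distrib sum_distrib_left right_diff_distrib mult_ac)
  also have "\<dots> = exp 1 * eval_fps (Hf p) w"
    using w by (simp flip: Hf_closed[OF w])
  finally show ?thesis by (simp add: ff_def w_def)
qed



lemma cis_alg:
  assumes "n \<ge> 1"
  shows "F / cis t ^ Suc n * \<i> * cis t - F * cis t ^ (n - 1) * \<i> * cis t
         = 2 * (F * complex_of_real (sin (real n * t)))"
proof -
  have c0: "cis t \<noteq> 0" by simp
  have 1: "F / cis t ^ Suc n * \<i> * cis t = \<i> * F * cis (- (real n * t))"
  proof -
    have "F / cis t ^ Suc n * \<i> * cis t = \<i> * F * inverse (cis t ^ n)"
      using c0 by (simp add: field_simps)
    also have "\<dots> = \<i> * F * cis (- (real n * t))"
      by (simp only: Complex.DeMoivre cis_inverse)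
    finally show ?thesis .
  qed
  have 2: "F * cis t ^ (n - 1) * \<i> * cis t = \<i> * F * cis (real n * t)"
  proof -
    have "cis t ^ (n - 1) * cis t = cis t ^ n"
      using assms by (metis Suc_diff_1 less_le_trans zero_less_one power_Suc2)
    note eq = this
    have "F * cis t ^ (n - 1) * \<i> * cis t = \<i> * F * (cis t ^ (n - 1) * cis t)"
      by (simp add: mult_ac)
    also have "\<dots> = \<i> * F * cis t ^ n"
      by (simp only: eq)
    also have "\<dots> = \<i> * F * cis (real n * t)"
      by (simp only: Complex.DeMoivre)
    finally show ?thesis .
  qed
  show ?thesis unfolding 1 2
    by (simp add: complex_eq_iff cis.sel algebra_simps)
qed

lemma key_integral:
  assumes "n \<ge> 1"
  shows "((\<lambda>t. 2 * (ff p (cis t) * complex_of_real (sin (real n * t)))) has_integral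
           (2 * pi * \<i> / fact n * (deriv ^^ n) (ff p) 0)) {0..2*pi}"
proof -
  have A: "((\<lambda>u. ff p u / (u - 0) ^ Suc n) has_contour_integral
          (2 * pi * \<i> / fact n * (deriv ^^ n) (ff p) 0)) (circlepath 0 1)"
    by (rule Cauchy_has_contour_integral_higher_derivative_circlepath)
       (auto intro: holomorphic_on_imp_continuous_on ff_holo)
  have B: "((\<lambda>u. ff p u * u ^ (n - 1)) has_contour_integral 0) (circlepath 0 1)"
    by (rule Cauchy_theorem_convex_simple[of _ UNIV])
       (auto intro!: holomorphic_intros ff_holo)
  have tp: "0 < 2 * pi" by simp
  have A': "((\<lambda>t. ff p (cis t) / cis t ^ Suc n * \<i> * cis t) has_integral
          (2 * pi * \<i> / fact n * (deriv ^^ n) (ff p) 0)) {0..2*pi}"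
    using A unfolding circlepath_def has_contour_integral_part_circlepath_iff[OF tp]
    by simp
  have B': "((\<lambda>t. ff p (cis t) * cis t ^ (n - 1) * \<i> * cis t) has_integral 0) {0..2*pi}"
    using B unfolding circlepath_def has_contour_integral_part_circlepath_iff[OF tp]
    by simp
  from has_integral_diff[OF A' B'] have C: "((\<lambda>t. ff p (cis t) / cis t ^ Suc n * \<i> * cis t - ff p (cis t) * cis t ^ (n - 1) * \<i> * cis t) has_integral
          (2 * pi * \<i> / fact n * (deriv ^^ n) (ff p) 0)) {0..2*pi}" by simp
  from C show ?thesis
    by (rule has_integral_eq[rotated]) (rule cis_alg[OF assms])
qed



lemma exp_cis_ne1: "exp (cis t) \<noteq> 1"
proof
  assume "exp (cis t) = 1"
  then obtain k :: int where k: "Re (cis t) = 0" "Im (cis t) = of_int (2 * k) * pi"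
    by (auto simp: exp_eq_1)
  have "1 = cmod (cis t)" by simp
  also have "\<dots> = \<bar>Im (cis t)\<bar>" by (rule cmod_eq_Im[OF k(1)])
  also have "\<dots> = \<bar>of_int (2 * k) * pi\<bar>" by (simp only: k(2))
  also have "\<dots> = 2 * \<bar>of_int k\<bar> * pi" by (simp add: abs_mult)
  finally have e: "1 = 2 * \<bar>real_of_int k\<bar> * pi" .
  show False
  proof (cases "k = 0")
    case True then show False using e by simp
  next
    case False
    then have "\<bar>real_of_int k\<bar> \<ge> 1" by linarith
    then have "2 * \<bar>real_of_int k\<bar> * pi \<ge> 2 * 1 * pi"
      by (intro mult_right_mono mult_left_mono) auto
    then show False using e pi_gt3 by linarith
  qed
qed

lemma GG_cnj: "GG p (cnj z) = cnj (GG p z)"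
  by (simp add: GG_def exp_cnj)

lemma coeff_ff: "fps_nth (fps_const (fact p) * (Hf p oo (fps_exp 1 - 1))) n = of_real (fps_nth (pBell_egf p) n)"
  by (simp add: pBell_egf_eq fps_compose_nth Epow_nth Hf_def sum_distrib_left mult_ac)



theorem mainTheorem7:
  fixes n p :: nat
  assumes "n \<ge> 1"
  shows "pBell n p = 2 * fact n * fact p / (pi * exp 1) *
    Im (integral {0..pi} (\<lambda>\<theta>::real.
      (exp (exp (exp (\<i> * \<theta>))) / (exp (exp (\<i> * \<theta>)) - 1) ^ p
       - exp 1 * (\<Sum>l<p. (exp (exp (\<i> * \<theta>)) - 1) powi (int l - int p) / fact l))
      * complex_of_real (sin (real n * \<theta>))))"
proof -
  define b where "b = fps_nth (pBell_egf p) n"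
  define D where "D = (deriv ^^ n) (ff p) 0"
  have Db: "D / fact n = of_real b"
    using fps_nth_fps_expansion[OF ff_expansion, of p n] coeff_ff[of p n]
    by (simp add: D_def b_def)
  define c :: complex where "c = exp 1 / fact p"
  define Q where "Q = (\<lambda>\<theta>::real. GG p (exp (\<i> * \<theta>)) * complex_of_real (sin (real n * \<theta>)))"
  define K where "K = c * (pi * \<i> * of_real b)"
  have Qeq: "Q t = c * (ff p (cis t) * complex_of_real (sin (real n * t)))" for t
    unfolding Q_def c_def using GG_ff[OF exp_cis_ne1, of p t]
    by (simp add: cis_conv_exp)
  have QK: "(Q has_integral K) {0..2*pi}"
  proof -
    have "((\<lambda>t. (c / 2) * (2 * (ff p (cis t) * complex_of_real (sin (real n * t))))) has_integral
           ((c / 2) * (2 * pi * \<i> / fact n * D))) {0..2*pi}"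
      by (rule has_integral_mult_right) (use key_integral[OF assms, of p] in \<open>simp add: D_def\<close>)
    moreover have "(c / 2) * (2 * pi * \<i> / fact n * D) = K"
      unfolding K_def using Db by (simp add: field_simps)
    ultimately have "((\<lambda>t. (c / 2) * (2 * (ff p (cis t) * complex_of_real (sin (real n * t))))) has_integral K) {0..2*pi}"
      by simp
    then show ?thesis
      by (rule has_integral_eq[rotated]) (simp add: Qeq)
  qed
  have ffc: "continuous_on UNIV (ff p)"
    by (rule holomorphic_on_imp_continuous_on[OF ff_holo])
  have Qc: "continuous_on UNIV Q"
  proof -
    have "continuous_on UNIV (\<lambda>t. ff p (cis t))"
      by (rule continuous_on_compose2[OF ffc]) (auto intro: continuous_intros)
    then have "continuous_on UNIV (\<lambda>t. c * (ff p (cis t) * complex_of_real (sin (real n * t))))"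
      by (intro continuous_intros)
    then show ?thesis by (simp add: Qeq[abs_def])
  qed
  have Qint: "Q integrable_on {a..b'}" for a b'
    by (rule integrable_continuous_interval) (rule continuous_on_subset[OF Qc], simp)
  define I where "I = integral {0..pi} Q"
  define J where "J = integral {pi..2*pi} Q"
  have IJ: "I + J = K"
    unfolding I_def J_def
    using Henstock_Kurzweil_Integration.integral_combine[where a=0 and c=pi and b="2*pi" and f=Q] Qint integral_unique[OF QK] by simp
  have Qsym: "Q (-1 *\<^sub>R s + 2 * pi) = - cnj (Q s)" for s
  proof -
    have 1: "exp (\<i> * complex_of_real (-1 *\<^sub>R s + 2 * pi)) = cnj (exp (\<i> * complex_of_real s))"
    proof -
      have "exp (\<i> * complex_of_real (-1 *\<^sub>R s + 2 * pi)) = cis (2 * pi - s)"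
        by (simp add: cis_conv_exp)
      also have "\<dots> = cnj (cis s)" by (simp add: complex_eq_iff)
      also have "\<dots> = cnj (exp (\<i> * complex_of_real s))" by (simp add: cis_conv_exp)
      finally show ?thesis .
    qed
    have 2: "sin (real n * (-1 *\<^sub>R s + 2 * pi)) = - sin (real n * s)"
    proof -
      have "real n * (-1 *\<^sub>R s + 2 * pi) = 2 * real n * pi - real n * s" by (simp add: algebra_simps)
      then show ?thesis by (simp add: sin_diff)
    qed
    show ?thesis unfolding Q_def 1 2 GG_cnj by simp
  qed
  have Qsym': "Q (2 * pi - s) = - cnj (Q s)" for s
    using Qsym[of s] by simp
  have "(Q has_integral J) (cbox pi (2*pi))"
    unfolding J_def using Qint[of pi "2*pi"] by (simp add: has_integral_integral)
  from has_integral_affinity[OF this, of "-1" "2*pi"]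
  have "((\<lambda>x. Q (-1 *\<^sub>R x + 2 * pi)) has_integral J)
          ((\<lambda>x. (1 / -1) *\<^sub>R x + - ((1 / -1) *\<^sub>R (2 * pi))) ` cbox pi (2 * pi))"
    by simp
  moreover have "(\<lambda>x. (1 / -1) *\<^sub>R x + - ((1 / -1) *\<^sub>R (2 * pi))) ` cbox pi (2 * pi) = {0..pi}"
  proof -
    have "(\<lambda>x. (1 / -1) *\<^sub>R x + - ((1 / -1) *\<^sub>R (2 * pi))) ` cbox pi (2 * pi) = (\<lambda>x. 2 * pi - x) ` {pi..2*pi}"
      by (intro image_cong) auto
    also have "\<dots> = {0..pi}"
    proof safe
      fix y assume "y \<in> {0..pi}"
      then show "y \<in> (\<lambda>x. 2 * pi - x) ` {pi..2*pi}"
        by (intro image_eqI[of _ _ "2 * pi - y"]) auto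
    qed auto
    finally show ?thesis .
  qed
  ultimately have "((\<lambda>x. - cnj (Q x)) has_integral J) {0..pi}"
    by (simp add: Qsym')
  moreover have "((\<lambda>x. - cnj (Q x)) has_integral (- cnj I)) {0..pi}"
  proof -
    have "(Q has_integral I) {0..pi}" unfolding I_def using Qint by (simp add: has_integral_integral)
    then have "((cnj \<circ> Q) has_integral cnj I) {0..pi}" by (simp add: has_integral_cnj)
    then show ?thesis by (intro has_integral_neg) (simp add: o_def)
  qed
  ultimately have JI: "J = - cnj I" by (rule has_integral_unique)
  have "Im (I + J) = 2 * Im I" by (simp add: JI)
  moreover have "Im K = exp 1 / fact p * pi * b"
  proof -
    have e1: "(exp 1 :: complex) = of_real (exp 1)" by (metis exp_of_real of_real_1)
    have "K = of_real (exp 1 / fact p * pi * b) * \<i>"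
      unfolding K_def c_def e1 by (simp add: field_simps)
    also have "\<dots> = \<i> * of_real (exp 1 / fact p * pi * b)" by (rule mult.commute)
    finally show ?thesis by (simp only: Im_i_times Re_complex_of_real)
  qed
  ultimately have ImI: "Im I = exp 1 / fact p * pi * b / 2" using IJ by simp
  have "pBell n p = 2 * fact n * fact p / (pi * exp 1) * Im I"
    unfolding ImI pBell_def b_def by (simp add: field_simps)
  then show ?thesis unfolding I_def Q_def GG_def .
qed

end
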